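(* Let $G$ and $H$ be countable groups and let $\mathfrak{w}$ be an absolutely generating probability measure on $G$. Let $(X,\mu)$ be a standard probability space, let $(\mathsf{A},\mathsf{B})$ be an ergodic p.m.p. action of $G\times H$ on $(X,\mu)$, and let $D$ be a $\mathsf{B}$-invariant measurable set. Then for every $p\in[1,\infty)$, \[\lim_{n\to\infty}\|\mu(D)-\mathsf{A}(\mathfrak{w}^{\ast n})\mathbf{1}_D\|_p=0.\]
   Context: A p.m.p. action of $G\times H$ is a commuting pair $(\mathsf{A},\mathsf{B})$ of p.m.p. actions of $G$ and $H$; it is ergodic if every set invariant under both has measure $0$ or $1$. $D$ is $\mathsf{B}$-invariant if $\mu(\mathsf{B}^hD\triangle D)=0$ for all $h\in H$. A probability measure $\mathfrak{w}$ on $G$ is absolutely generating if it is symmetric ($\mathfrak{w}(g)=\mathfrak{w}(g^{-1})$) and the support of $\mathfrak{w}\ast\mathfrak{w}$ generates $G$; $\mathfrak{w}^{\ast n}$ denotes the $n$-fold convolution power. $[\mathsf{A}(\mathfrak{w})\psi](x)=\sum_{g\in G}\mathfrak{w}(g)\psi(\mathsf{A}^gx)$; $\mu(D)$ is regarded as a constant function; $\mathbf{1}_D$ is the indicator function. *)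

theory Defs
  imports "HOL-Probability.Probability"
begin

text \<open>Groups are written additively (class group_add, not necessarily commutative).\<close>

inductive_set gen_subgroup :: "'g::group_add set \<Rightarrow> 'g set" for S where
  gen_base: "s \<in> S \<Longrightarrow> s \<in> gen_subgroup S"
| gen_zero: "0 \<in> gen_subgroup S"
| gen_add: "a \<in> gen_subgroup S \<Longrightarrow> b \<in> gen_subgroup S \<Longrightarrow> a + b \<in> gen_subgroup S"
| gen_uminus: "a \<in> gen_subgroup S \<Longrightarrow> - a \<in> gen_subgroup S"

definition conv_pmf :: "'g::group_add pmf \<Rightarrow> 'g pmf \<Rightarrow> 'g pmf" where
  "conv_pmf v w = map_pmf (\<lambda>(a, b). a + b) (pair_pmf v w)"

fun conv_pow :: "'g::group_add pmf \<Rightarrow> nat \<Rightarrow> 'g pmf" where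
  "conv_pow w 0 = return_pmf 0"
| "conv_pow w (Suc n) = conv_pmf (conv_pow w n) w"

definition absolutely_generating :: "'g::group_add pmf \<Rightarrow> bool" where
  "absolutely_generating w \<longleftrightarrow>
     (\<forall>g. pmf w g = pmf w (- g)) \<and> gen_subgroup (set_pmf (conv_pmf w w)) = UNIV"

definition pmp_action :: "'x measure \<Rightarrow> ('g::group_add \<Rightarrow> 'x \<Rightarrow> 'x) \<Rightarrow> bool" where
  "pmp_action M A \<longleftrightarrow> (\<forall>g. A g \<in> measurable M M \<and> distr M M (A g) = M) \<and> A 0 = id \<and>
     (\<forall>g h. A (g + h) = A g \<circ> A h)"

definition ae_invariant :: "'x measure \<Rightarrow> ('g \<Rightarrow> 'x \<Rightarrow> 'x) \<Rightarrow> 'x set \<Rightarrow> bool" where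
  "ae_invariant M A S \<longleftrightarrow> (\<forall>g. measure M ((A g ` S - S) \<union> (S - A g ` S)) = 0)"

definition ergodic_pair :: "'x measure \<Rightarrow> ('g \<Rightarrow> 'x \<Rightarrow> 'x) \<Rightarrow> ('h \<Rightarrow> 'x \<Rightarrow> 'x) \<Rightarrow> bool" where
  "ergodic_pair M A B \<longleftrightarrow> (\<forall>S \<in> sets M. ae_invariant M A S \<and> ae_invariant M B S \<longrightarrow>
     measure M S = 0 \<or> measure M S = 1)"

definition action_op :: "('g \<Rightarrow> 'x \<Rightarrow> 'x) \<Rightarrow> 'g pmf \<Rightarrow> ('x \<Rightarrow> real) \<Rightarrow> 'x \<Rightarrow> real" where
  "action_op A v \<psi> x = (\<Sum>\<^sub>\<infinity>g. pmf v g * \<psi> (A g x))"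

end

theory Submission
  imports Defs
begin

lemma fub_pmf:
  fixes v :: "'g::countable pmf" and N :: "'y measure" and F :: "'g \<Rightarrow> 'y \<Rightarrow> real"
  assumes N: "prob_space N" and Fm: "\<And>s. F s \<in> borel_measurable N"
    and Fb: "\<And>s y. \<bar>F s y\<bar> \<le> C"
  shows "(\<lambda>y. \<integral>s. F s y \<partial>v) \<in> borel_measurable N"
    and "(\<integral>y. (\<integral>s. F s y \<partial>v) \<partial>N) = (\<integral>s. (\<integral>y. F s y \<partial>N) \<partial>v)"
proof -
  interpret N: prob_space N by fact
  interpret P: pair_prob_space "measure_pmf v" N
    by (simp add: pair_prob_space.intro measure_pmf.prob_space_axioms N pair_sigma_finite_def
       prob_space_imp_sigma_finite)
  have m1: "(\<lambda>(s, y). F s y) \<in> borel_measurable (count_space UNIV \<Otimes>\<^sub>M N)"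
    by (rule measurable_pair_measure_countable1) (auto simp: Fm)
  have m: "(\<lambda>(s, y). F s y) \<in> borel_measurable (measure_pmf v \<Otimes>\<^sub>M N)"
    using m1 by (subst measurable_cong_sets[OF sets_pair_measure_cong[OF sets_measure_pmf_count_space refl] refl])
  have int: "integrable (measure_pmf v \<Otimes>\<^sub>M N) (\<lambda>(s, y). F s y)"
    by (rule P.integrable_const_bound[where B=C]) (auto simp: m Fb)
  show "(\<lambda>y. \<integral>s. F s y \<partial>v) \<in> borel_measurable N"
    using P.integrable_snd[OF int] by auto
  show "(\<integral>y. (\<integral>s. F s y \<partial>v) \<partial>N) = (\<integral>s. (\<integral>y. F s y \<partial>N) \<partial>v)"
    using P.Fubini_integral[OF int] .
qed

lemma pmf_integrable_bound:
  fixes v :: "'g pmf" and K :: "'g \<Rightarrow> real" assumes "\<And>s. \<bar>K s\<bar> \<le> C"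
  shows "integrable (measure_pmf v) K"
  by (rule measure_pmf.integrable_const_bound[where B=C]) (auto simp: assms)

lemma pmf_int_bound:
  fixes v :: "'g pmf" and K :: "'g \<Rightarrow> real" assumes "\<And>s. \<bar>K s\<bar> \<le> C"
  shows "\<bar>measure_pmf.expectation v K\<bar> \<le> C"
proof -
  have "\<bar>measure_pmf.expectation v K\<bar> \<le> measure_pmf.expectation v (\<lambda>s. \<bar>K s\<bar>)"
    by (rule integral_abs_bound)
  also have "\<dots> \<le> measure_pmf.expectation v (\<lambda>s. C)"
    by (rule integral_mono) (auto intro: pmf_integrable_bound[where C=C] simp: assms)
  finally show ?thesis by simp
qed

lemma action_op_eq:
  fixes v :: "'g pmf" and \<psi> :: "'x \<Rightarrow> real" assumes "\<And>y. \<bar>\<psi> y\<bar> \<le> C"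
  shows "action_op A v \<psi> x = measure_pmf.expectation v (\<lambda>s. \<psi> (A s x))"
proof -
  have int: "integrable (measure_pmf v) (\<lambda>s. \<psi> (A s x))"
    by (rule pmf_integrable_bound[where C=C]) (simp add: assms)
  have int2: "integrable (count_space UNIV) (\<lambda>s. pmf v s * \<psi> (A s x))"
    using int unfolding measure_pmf_eq_density
    by (subst (asm) integrable_density) auto
  have "measure_pmf.expectation v (\<lambda>s. \<psi> (A s x)) =
        (\<integral>s. pmf v s * \<psi> (A s x) \<partial>count_space UNIV)"
    unfolding measure_pmf_eq_density by (subst integral_density) auto
  also have "\<dots> = infsetsum (\<lambda>s. pmf v s * \<psi> (A s x)) UNIV"
    by (simp add: infsetsum_def)
  also have "\<dots> = infsum (\<lambda>s. pmf v s * \<psi> (A s x)) UNIV"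
    by (rule infsetsum_infsum) (simp add: abs_summable_on_def int2)
  finally show ?thesis by (simp add: action_op_def)
qed

lemma pmf_single_le:
  fixes v :: "'g pmf" and K :: "'g \<Rightarrow> real" assumes "\<And>t. 0 \<le> K t" "\<And>t. K t \<le> C"
  shows "pmf v s * K s \<le> measure_pmf.expectation v K"
proof -
  have "measure_pmf.expectation v (\<lambda>t. K t * indicator {s} t) = (\<Sum>a\<in>{s}. K a * indicator {s} a * pmf v a)"
    by (rule integral_measure_pmf_real) (auto simp: indicator_def split: if_splits)
  also have "\<dots> = pmf v s * K s" by simp
  finally have eq: "measure_pmf.expectation v (\<lambda>t. K t * indicator {s} t) = pmf v s * K s" .
  have "measure_pmf.expectation v (\<lambda>t. K t * indicator {s} t) \<le> measure_pmf.expectation v K"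
  proof (rule integral_mono)
    have C0: "0 \<le> C" using assms(1)[of s] assms(2)[of s] by linarith
    show "integrable (measure_pmf v) (\<lambda>t. K t * indicator {s} t)"
      by (rule pmf_integrable_bound[where C=C]) (use assms C0 in \<open>auto simp: indicator_def abs_le_iff\<close>)
    show "integrable (measure_pmf v) K"
      by (rule pmf_integrable_bound[where C=C]) (use assms C0 in \<open>auto simp: abs_le_iff\<close>)
    show "K t * indicator {s} t \<le> K t" for t using assms(1)[of t] by (auto simp: indicator_def)
  qed
  then show ?thesis using eq by simp
qed

lemma pair_pmf_iter:
  fixes u :: "'a pmf" and v :: "'b pmf" and F :: "'a \<times> 'b \<Rightarrow> real"
  assumes "\<And>z. \<bar>F z\<bar> \<le> C"
  shows "measure_pmf.expectation (pair_pmf u v) F =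
     measure_pmf.expectation u (\<lambda>a. measure_pmf.expectation v (\<lambda>b. F (a, b)))"
proof -
  have "pair_pmf u v = bind_pmf u (\<lambda>a. map_pmf (Pair a) v)"
    by (simp add: pair_pmf_def map_pmf_def)
  then have "measure_pmf (pair_pmf u v) = measure_pmf u \<bind> (\<lambda>a. measure_pmf (map_pmf (Pair a) v))"
    by (simp add: measure_pmf_bind)
  then have "measure_pmf.expectation (pair_pmf u v) F =
     integral\<^sup>L (measure_pmf u \<bind> (\<lambda>a. measure_pmf (map_pmf (Pair a) v))) F" by simp
  also have "\<dots> = \<integral>a. integral\<^sup>L (measure_pmf (map_pmf (Pair a) v)) F \<partial>measure_pmf u"
    apply (rule integral_bind[where K="count_space UNIV" and B=C and B'=1])
    using assms measure_pmf.prob_space_axioms[of u] by (auto intro: measure_pmf.prob_space_axioms prob_space_imp_subprob_space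
       simp: measure_pmf_in_subprob_algebra prob_space_def prob_space.emeasure_space_1)
  also have "\<dots> = measure_pmf.expectation u (\<lambda>a. measure_pmf.expectation v (\<lambda>b. F (a, b)))"
    by simp
  finally show ?thesis .
qed

lemma sym_pmf_int:
  fixes w :: "'g::group_add pmf" and K :: "'g \<Rightarrow> real" assumes "\<And>s. pmf w s = pmf w (- s)"
  shows "measure_pmf.expectation w (\<lambda>s. K (- s)) = measure_pmf.expectation w K"
proof -
  have "map_pmf uminus w = w"
  proof (rule pmf_eqI)
    fix s
    have "pmf (map_pmf uminus w) (- (- s)) = pmf w (- s)"
      by (rule pmf_map_inj') (simp add: inj_def)
    then show "pmf (map_pmf uminus w) s = pmf w s" using assms[of s] by simp
  qed
  then have "measure_pmf.expectation w K = measure_pmf.expectation (map_pmf uminus w) K" by simp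
  also have "\<dots> = measure_pmf.expectation w (\<lambda>s. K (- s))" by simp
  finally show ?thesis by simp
qed

locale pmp =
  fixes M :: "'x measure" and T :: "'g::{group_add,countable} \<Rightarrow> 'x \<Rightarrow> 'x"
  assumes prob: "prob_space M" and act: "pmp_action M T" and sp: "space M = UNIV"
begin

lemma Tm[measurable]: "T s \<in> measurable M M"
  using act by (auto simp: pmp_action_def)

lemma Td: "distr M M (T s) = M"
  using act by (auto simp: pmp_action_def)

lemma T0: "T 0 x = x"
  using act by (auto simp: pmp_action_def)

lemma Tadd: "T (a + b) x = T a (T b x)"
  using act by (auto simp: pmp_action_def)

lemma Tinv1: "T a (T (- a) x) = x"
  using Tadd[of a "-a" x] T0 by simp

lemma Tinv2: "T (- a) (T a x) = x"
  using Tadd[of "-a" a x] T0 by simp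

lemma meas_T: "\<psi> \<in> borel_measurable M \<Longrightarrow> (\<lambda>x. \<psi> (T s x)) \<in> borel_measurable M"
  by (rule measurable_compose[OF Tm])

lemma int_T:
  fixes \<psi> :: "'x \<Rightarrow> real"
  assumes "\<psi> \<in> borel_measurable M"
  shows "(\<integral>x. \<psi> (T s x) \<partial>M) = integral\<^sup>L M \<psi>"
proof -
  have "integral\<^sup>L M \<psi> = integral\<^sup>L (distr M M (T s)) \<psi>" using Td by simp
  also have "\<dots> = (\<integral>x. \<psi> (T s x) \<partial>M)"
    by (rule integral_distr[OF Tm assms])
  finally show ?thesis by simp
qed

lemma pre_sets: "S \<in> sets M \<Longrightarrow> {x. T s x \<in> S} \<in> sets M"
  using measurable_sets[OF Tm, of S s] sp by (simp add: vimage_def)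

lemma AE_T:
  assumes "AE x in M. P x"
  shows "AE x in M. P (T s x)"
proof -
  from assms obtain N where N: "{x\<in>space M. \<not> P x} \<subseteq> N" "emeasure M N = 0" "N \<in> sets M"
    by (auto elim: AE_E)
  have "emeasure M {x. T s x \<in> N} = emeasure (distr M M (T s)) N"
    using N(3) sp by (subst emeasure_distr[OF Tm]) (auto simp: vimage_def)
  also have "\<dots> = 0" using Td N by simp
  finally show ?thesis
    by (intro AE_I[where N="{x. T s x \<in> N}"]) (use N sp pre_sets in auto)
qed

lemma image_T: "T s ` S = {x. T (- s) x \<in> S}"
proof safe
  fix y assume "y \<in> S" then show "T (- s) (T s y) \<in> S" by (simp add: Tinv2)
next
  fix x assume "T (- s) x \<in> S"
  then show "x \<in> T s ` S" by (rule rev_image_eqI) (simp add: Tinv1)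
qed

lemma ae_inv_set:
  fixes g :: "'x \<Rightarrow> real"
  assumes gm: "g \<in> borel_measurable M" and inv: "\<And>s. AE x in M. g (T s x) = g x"
  shows "ae_invariant M T {x. 0 < g x}"
  unfolding ae_invariant_def
proof
  fix s
  let ?S = "{x. 0 < g x}"
  have Sm: "?S \<in> sets M"
  proof -
    have "g -` {0<..} \<inter> space M \<in> sets M" by (rule measurable_sets[OF gm]) simp
    then show ?thesis using sp by (simp add: vimage_def)
  qed
  have eq: "T s ` ?S - ?S \<union> (?S - T s ` ?S) = {x. T (- s) x \<in> ?S} - ?S \<union> (?S - {x. T (- s) x \<in> ?S})"
    by (simp add: image_T)
  have m: "{x. T (- s) x \<in> ?S} - ?S \<union> (?S - {x. T (- s) x \<in> ?S}) \<in> sets M"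
    using Sm pre_sets[OF Sm, of "-s"] by (intro sets.Un sets.Diff) auto
  have "AE x in M. x \<notin> {x. T (- s) x \<in> ?S} - ?S \<union> (?S - {x. T (- s) x \<in> ?S})"
    using inv[of "-s"] by eventually_elim auto
  then have "emeasure M ({x. T (- s) x \<in> ?S} - ?S \<union> (?S - {x. T (- s) x \<in> ?S})) = 0"
    using m by (subst AE_iff_measurable[symmetric, where P="\<lambda>x. x \<notin> _"]) (auto simp: sp)
  then show "measure M (T s ` ?S - ?S \<union> (?S - T s ` ?S)) = 0"
    unfolding eq by (simp add: measure_def)
qed

lemma inv_ind:
  assumes D: "D \<in> sets M" and inv: "ae_invariant M T D"
  shows "AE x in M. indicator D (T s x) = (indicator D x :: real)"
proof -
  let ?N = "{x. T s x \<in> D} - D \<union> (D - {x. T s x \<in> D})"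
  have eq: "T (- s) ` D - D \<union> (D - T (- s) ` D) = ?N"
    by (simp add: image_T)
  have m: "?N \<in> sets M" using D pre_sets by auto
  interpret prob_space M by (rule prob)
  have "measure M ?N = 0" using inv eq unfolding ae_invariant_def by metis
  then have "emeasure M ?N = 0" using m by (simp add: emeasure_eq_measure)
  then have "AE x in M. x \<notin> ?N" using m by (intro AE_I[where N="?N"]) auto
  then show ?thesis by eventually_elim (auto simp: indicator_def)
qed

end

lemma sq_int_le:
  fixes X :: "'a \<Rightarrow> real"
  assumes "prob_space N" "integrable N X" "integrable N (\<lambda>x. (X x)\<^sup>2)"
  shows "(integral\<^sup>L N X)\<^sup>2 \<le> (\<integral>x. (X x)\<^sup>2 \<partial>N)"
proof -
  interpret prob_space N by fact
  show ?thesis using variance_eq[OF assms(2,3)] variance_positive[of X] by simp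
qed

context pmp
begin

definition Pv :: "'g pmf \<Rightarrow> ('x \<Rightarrow> real) \<Rightarrow> 'x \<Rightarrow> real" where
  "Pv v \<psi> = (\<lambda>x. measure_pmf.expectation v (\<lambda>s. \<psi> (T s x)))"

definition good :: "real \<Rightarrow> ('x \<Rightarrow> real) \<Rightarrow> bool" where
  "good C \<psi> \<longleftrightarrow> \<psi> \<in> borel_measurable M \<and> (\<forall>x. \<bar>\<psi> x\<bar> \<le> C)"

lemma goodD: "good C \<psi> \<Longrightarrow> \<psi> \<in> borel_measurable M" "good C \<psi> \<Longrightarrow> \<bar>\<psi> x\<bar> \<le> C"
  by (auto simp: good_def)

lemma good_int: "good C \<psi> \<Longrightarrow> integrable M \<psi>"
  using prob by (intro finite_measure.integrable_const_bound[where B=C])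
     (auto simp: good_def prob_space_def)

lemma good_mult: "good C \<phi> \<Longrightarrow> good D \<psi> \<Longrightarrow> good (C * D) (\<lambda>x. \<phi> x * \<psi> x)"
  unfolding good_def by (auto simp: abs_mult intro: mult_mono')

lemma good_T: "good C \<psi> \<Longrightarrow> good C (\<lambda>x. \<psi> (T s x))"
  unfolding good_def by (auto intro: meas_T)

lemma good_diff: "good C \<phi> \<Longrightarrow> good D \<psi> \<Longrightarrow> good (C + D) (\<lambda>x. \<phi> x - \<psi> x)"
  unfolding good_def by (auto simp: abs_le_iff) (smt (verit) abs_le_iff)+

lemma good_int_bound: "good C \<psi> \<Longrightarrow> \<bar>integral\<^sup>L M \<psi>\<bar> \<le> C"
proof -
  assume a: "good C \<psi>"
  interpret prob_space M by (rule prob)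
  have "\<bar>integral\<^sup>L M \<psi>\<bar> \<le> (\<integral>x. \<bar>\<psi> x\<bar> \<partial>M)" by (rule integral_abs_bound)
  also have "\<dots> \<le> (\<integral>x. C \<partial>M)"
    by (rule integral_mono) (use a good_int[OF a] in \<open>auto simp: good_def intro: integrable_abs\<close>)
  finally show ?thesis by (simp add: prob_space)
qed

lemma good_abs: "good C \<psi> \<Longrightarrow> good C (\<lambda>x. \<bar>\<psi> x\<bar>)"
  unfolding good_def by auto

lemma good_sq: "good C \<psi> \<Longrightarrow> good (C * C) (\<lambda>x. (\<psi> x)\<^sup>2)"
  using good_mult[of C \<psi> C \<psi>] by (simp add: power2_eq_square)

lemma Pv_bound: "(\<And>y. \<bar>\<psi> y\<bar> \<le> C) \<Longrightarrow> \<bar>Pv v \<psi> x\<bar> \<le> C"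
  unfolding Pv_def by (rule pmf_int_bound) auto

lemma Pv_meas: "good C \<psi> \<Longrightarrow> Pv v \<psi> \<in> borel_measurable M"
  unfolding Pv_def
  by (rule fub_pmf(1)[where C=C]) (auto simp: prob good_def intro: meas_T)

lemma good_Pv: "good C \<psi> \<Longrightarrow> good C (Pv v \<psi>)"
  using Pv_meas Pv_bound by (auto simp: good_def)

lemma Pv_fub:
  assumes "good C1 \<phi>" "good C2 \<psi>"
  shows "(\<integral>x. \<phi> x * Pv v \<psi> x \<partial>M) = measure_pmf.expectation v (\<lambda>s. \<integral>x. \<phi> x * \<psi> (T s x) \<partial>M)"
proof -
  have "(\<integral>x. \<phi> x * Pv v \<psi> x \<partial>M) = (\<integral>x. measure_pmf.expectation v (\<lambda>s. \<phi> x * \<psi> (T s x)) \<partial>M)"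
    unfolding Pv_def by simp
  also have "\<dots> = measure_pmf.expectation v (\<lambda>s. \<integral>x. \<phi> x * \<psi> (T s x) \<partial>M)"
    apply (rule fub_pmf(2)[where C="C1 * C2"])
    using good_mult[OF assms(1) good_T[OF assms(2)]] by (auto simp: prob good_def)
  finally show ?thesis .
qed

lemma Pv_int:
  assumes "good C \<psi>" shows "integral\<^sup>L M (Pv v \<psi>) = integral\<^sup>L M \<psi>"
proof -
  have e: "(\<integral>x. \<psi> (T s x) \<partial>M) = integral\<^sup>L M \<psi>" for s using int_T[OF goodD(1)[OF assms]] .
  show ?thesis using Pv_fub[of 1 "\<lambda>_. 1" C \<psi> v] assms by (simp add: good_def e measure_pmf.prob_space)
qed

lemma swap_T:
  assumes "good C1 \<phi>" "good C2 \<psi>"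
  shows "(\<integral>x. \<phi> x * \<psi> (T s x) \<partial>M) = (\<integral>x. \<phi> (T (- s) x) * \<psi> x \<partial>M)"
  using int_T[OF goodD(1)[OF good_mult[OF assms(1) good_T[OF assms(2), of s]]], of "-s"]
  by (simp add: Tinv1)

lemma Pv_const:
  assumes "good C \<psi>" shows "Pv v (\<lambda>y. \<psi> y + c) x = Pv v \<psi> x + c"
proof -
  have "integrable (measure_pmf v) (\<lambda>s. \<psi> (T s x))"
    by (rule pmf_integrable_bound[where C=C]) (use assms in \<open>auto simp: good_def\<close>)
  then show ?thesis unfolding Pv_def by (simp add: measure_pmf.prob_space)
qed

lemma Pv_AE:
  assumes "AE x in M. \<psi> x = \<phi> x"
  shows "AE x in M. Pv v \<psi> x = Pv v \<phi> x"
proof -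
  have "AE x in M. \<forall>s. \<psi> (T s x) = \<phi> (T s x)"
    using AE_T[OF assms] by (subst AE_all_countable) auto
  then show ?thesis unfolding Pv_def by eventually_elim simp
qed

lemma Pv_jensen:
  assumes "good C \<psi>" shows "(Pv v \<psi> x)\<^sup>2 \<le> Pv v (\<lambda>y. (\<psi> y)\<^sup>2) x"
  unfolding Pv_def
  apply (rule sq_int_le[OF measure_pmf.prob_space_axioms])
   apply (rule pmf_integrable_bound[where C=C]) using assms apply (simp add: good_def)
  apply (rule pmf_integrable_bound[where C="C*C"]) using goodD(2)[OF good_sq[OF assms]] by simp

lemma Pv_conv:
  assumes "good C \<psi>"
  shows "Pv (conv_pmf u v) \<psi> x = Pv v (Pv u \<psi>) x"
proof -
  have b: "\<And>y. \<bar>\<psi> y\<bar> \<le> C" using assms by (simp add: good_def)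
  have "Pv (conv_pmf u v) \<psi> x = measure_pmf.expectation (pair_pmf u v) (\<lambda>(a, b). \<psi> (T (a + b) x))"
    unfolding Pv_def conv_pmf_def by (simp add: case_prod_unfold)
  also have "\<dots> = measure_pmf.expectation u (\<lambda>a. measure_pmf.expectation v (\<lambda>b. \<psi> (T a (T b x))))"
    by (subst pair_pmf_iter[where C=C]) (auto simp: b Tadd)
  also have "\<dots> = measure_pmf.expectation v (\<lambda>b. measure_pmf.expectation u (\<lambda>a. \<psi> (T a (T b x))))"
    by (rule fub_pmf(2)[where C=C]) (auto simp: b measure_pmf.prob_space_axioms)
  also have "\<dots> = Pv v (Pv u \<psi>) x" unfolding Pv_def by simp
  finally show ?thesis .
qed

end

locale mainloc = pmp M T for M :: "'x measure" and T :: "'g::{group_add,countable} \<Rightarrow> 'x \<Rightarrow> 'x" +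
  fixes w :: "'g pmf" and D :: "'x set"
  assumes sym: "\<And>s. pmf w s = pmf w (- s)"
    and Dm: "D \<in> sets M"
begin

abbreviation "P \<equiv> Pv w"

lemma selfadj:
  assumes "good C1 \<phi>" "good C2 \<psi>"
  shows "(\<integral>x. \<phi> x * P \<psi> x \<partial>M) = (\<integral>x. P \<phi> x * \<psi> x \<partial>M)"
proof -
  have "(\<integral>x. \<phi> x * P \<psi> x \<partial>M) = measure_pmf.expectation w (\<lambda>s. \<integral>x. \<phi> x * \<psi> (T s x) \<partial>M)"
    by (rule Pv_fub[OF assms])
  also have "\<dots> = measure_pmf.expectation w (\<lambda>s. \<integral>x. \<phi> (T (- s) x) * \<psi> x \<partial>M)"
    using swap_T[OF assms] by simp
  also have "\<dots> = measure_pmf.expectation w (\<lambda>s. \<integral>x. \<phi> (T s x) * \<psi> x \<partial>M)"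
    by (rule sym_pmf_int[where K="\<lambda>s. \<integral>x. \<phi> (T s x) * \<psi> x \<partial>M"]) (rule sym)
  also have "\<dots> = measure_pmf.expectation w (\<lambda>s. \<integral>x. \<psi> x * \<phi> (T s x) \<partial>M)"
    by (simp add: mult.commute)
  also have "\<dots> = (\<integral>x. \<psi> x * P \<phi> x \<partial>M)"
    by (rule Pv_fub[OF assms(2,1), symmetric])
  finally show ?thesis by (simp add: mult.commute)
qed

definition f :: "'x \<Rightarrow> real" where "f x = indicator D x - measure M D"

lemma good_f: "good 1 f"
proof -
  interpret prob_space M by (rule prob)
  have p1: "0 \<le> measure M D" and p2: "measure M D \<le> 1" by auto
  show ?thesis unfolding good_def f_def using Dm
    by (auto simp: indicator_def abs_le_iff) (use p1 p2 in linarith)+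
qed

definition Pn :: "nat \<Rightarrow> 'x \<Rightarrow> real" where "Pn n = (P ^^ n) f"

lemma good_Pn: "good 1 (Pn n)"
  by (induction n) (auto simp: Pn_def good_f good_Pv)

lemma Pn_Suc: "Pn (Suc n) = P (Pn n)"
  by (simp add: Pn_def)

definition J :: "nat \<Rightarrow> nat \<Rightarrow> real" where "J i j = (\<integral>x. Pn i x * Pn j x \<partial>M)"

lemma J_shift: "J (Suc i) j = J i (Suc j)"
  unfolding J_def Pn_Suc using selfadj[OF good_Pn[of i] good_Pn[of j]] by simp

lemma J_sum: "J i j = J 0 (i + j)"
proof (induction i arbitrary: j)
  case 0 then show ?case by simp
next
  case (Suc i) then show ?case by (simp add: J_shift)
qed

definition a :: "nat \<Rightarrow> real" where "a n = (\<integral>x. (Pn n x)\<^sup>2 \<partial>M)"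

lemma a_J: "a n = J n n" unfolding a_def J_def by (simp add: power2_eq_square)

lemma J_a: "J i j = a ((i + j) div 2)" if "even (i + j)"
  using that J_sum[of i j] J_sum[of "(i + j) div 2" "(i + j) div 2"] a_J
  by (metis dvd_mult_div_cancel mult_2)

lemma a_nonneg: "0 \<le> a n"
  unfolding a_def by (rule integral_nonneg_AE) auto

lemma a_le1: "a n \<le> 1"
proof -
  interpret prob_space M by (rule prob)
  have "a n \<le> (\<integral>x. 1 \<partial>M)" unfolding a_def
    apply (rule integral_mono)
    using good_int[OF good_sq[OF good_Pn[of n]]] goodD(2)[OF good_Pn[of n]]
    by (auto simp: abs_le_iff power2_eq_square) (smt (verit) mult_le_one mult_minus_left mult_minus_right)+
  then show ?thesis by (simp add: prob_space)
qed

lemma a_mono: "a (Suc n) \<le> a n"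
proof -
  have "a (Suc n) \<le> (\<integral>x. P (\<lambda>y. (Pn n y)\<^sup>2) x \<partial>M)"
    unfolding a_def Pn_Suc
    apply (rule integral_mono)
    using good_int[OF good_sq[OF good_Pv[OF good_Pn[of n]]]] good_int[OF good_Pv[OF good_sq[OF good_Pn[of n]]]]
      Pv_jensen[OF good_Pn[of n]] by auto
  also have "\<dots> = a n" unfolding a_def by (rule Pv_int[OF good_sq[OF good_Pn]])
  finally show ?thesis .
qed

lemma a_conv: "convergent a"
proof (rule Bseq_monoseq_convergent)
  show "Bseq a" using a_nonneg a_le1 by (intro BseqI'[where K=1]) auto
  show "monoseq a" unfolding monoseq_def using a_mono
    by (metis decseq_Suc_iff decseq_def)
qed

definition L where "L = lim a"

lemma a_lim: "a \<longlonglongrightarrow> L"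
  using a_conv by (simp add: L_def convergent_LIMSEQ_iff)

lemma int_sq_diff:
  assumes "good C1 u" "good C2 v"
  shows "(\<integral>x. (u x - v x)\<^sup>2 \<partial>M) = (\<integral>x. (u x)\<^sup>2 \<partial>M) + (\<integral>x. (v x)\<^sup>2 \<partial>M) - 2 * (\<integral>x. u x * v x \<partial>M)"
proof -
  have i1: "integrable M (\<lambda>x. (u x)\<^sup>2)" by (rule good_int[OF good_sq[OF assms(1)]])
  have i2: "integrable M (\<lambda>x. (v x)\<^sup>2)" by (rule good_int[OF good_sq[OF assms(2)]])
  have i3: "integrable M (\<lambda>x. u x * v x)" by (rule good_int[OF good_mult[OF assms]])
  have "(\<integral>x. (u x - v x)\<^sup>2 \<partial>M) = (\<integral>x. ((u x)\<^sup>2 + (v x)\<^sup>2) - 2 * (u x * v x) \<partial>M)"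
    by (simp add: power2_diff algebra_simps)
  also have "\<dots> = (\<integral>x. (u x)\<^sup>2 + (v x)\<^sup>2 \<partial>M) - (\<integral>x. 2 * (u x * v x) \<partial>M)"
    by (rule Bochner_Integration.integral_diff) (use i1 i2 i3 in auto)
  also have "\<dots> = (\<integral>x. (u x)\<^sup>2 \<partial>M) + (\<integral>x. (v x)\<^sup>2 \<partial>M) - 2 * (\<integral>x. u x * v x \<partial>M)"
    using i1 i2 i3 by simp
  finally show ?thesis .
qed

lemma L1_le_L2:
  assumes "good C h"
  shows "(\<integral>x. \<bar>h x\<bar> \<partial>M) \<le> sqrt (\<integral>x. (h x)\<^sup>2 \<partial>M)"
proof (rule real_le_rsqrt)
  have g1: "good C (\<lambda>x. \<bar>h x\<bar>)" using assms by (auto simp: good_def)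
  show "(\<integral>x. \<bar>h x\<bar> \<partial>M)\<^sup>2 \<le> (\<integral>x. (h x)\<^sup>2 \<partial>M)"
    using sq_int_le[OF prob good_int[OF g1] good_int[OF good_sq[OF g1]]] by simp
qed

lemma D2_eq: "(\<integral>x. (Pn (2*n) x - Pn (2*m) x)\<^sup>2 \<partial>M) = a (2*n) + a (2*m) - 2 * a (n + m)"
proof -
  have "(\<integral>x. Pn (2*n) x * Pn (2*m) x \<partial>M) = a (n + m)"
    using J_a[of "2*n" "2*m"] unfolding J_def by simp
  then show ?thesis
    using int_sq_diff[OF good_Pn good_Pn, of "2*n" "2*m"] unfolding a_def by simp
qed

lemma cauchy_L1:
  assumes "0 < e"
  shows "\<exists>N. \<forall>n\<ge>N. \<forall>m\<ge>N. (\<integral>x. \<bar>Pn (2*n) x - Pn (2*m) x\<bar> \<partial>M) < e"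
proof -
  have "e * e / 4 > 0" using assms by simp
  from LIMSEQ_D[OF a_lim this] obtain N where N: "\<And>k. k \<ge> N \<Longrightarrow> \<bar>a k - L\<bar> < e * e / 4"
    by auto
  have "(\<integral>x. \<bar>Pn (2*n) x - Pn (2*m) x\<bar> \<partial>M) < e" if "n \<ge> N" "m \<ge> N" for n m
  proof -
    have h1: "\<bar>a (2*n) - L\<bar> < e * e / 4" "\<bar>a (2*m) - L\<bar> < e * e / 4" "\<bar>a (n+m) - L\<bar> < e * e / 4"
      using N[of "2*n"] N[of "2*m"] N[of "n+m"] that by auto
    have "a (2*n) + a (2*m) - 2 * a (n + m) < e * e"
      using h1 unfolding abs_less_iff by linarith
    then have lt: "(\<integral>x. (Pn (2*n) x - Pn (2*m) x)\<^sup>2 \<partial>M) < e\<^sup>2"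
      using D2_eq[of n m] by (simp add: power2_eq_square)
    have "(\<integral>x. \<bar>Pn (2*n) x - Pn (2*m) x\<bar> \<partial>M) \<le> sqrt (\<integral>x. (Pn (2*n) x - Pn (2*m) x)\<^sup>2 \<partial>M)"
      by (rule L1_le_L2[OF good_diff[OF good_Pn good_Pn]])
    also have "\<dots> < sqrt (e\<^sup>2)" using lt by (rule real_sqrt_less_mono)
    finally show ?thesis using assms by simp
  qed
  then show ?thesis by blast
qed

definition NN :: "nat \<Rightarrow> nat" where
  "NN k = (SOME N. \<forall>n\<ge>N. \<forall>m\<ge>N. (\<integral>x. \<bar>Pn (2*n) x - Pn (2*m) x\<bar> \<partial>M) < (1/2)^k)"

lemma NN: "n \<ge> NN k \<Longrightarrow> m \<ge> NN k \<Longrightarrow> (\<integral>x. \<bar>Pn (2*n) x - Pn (2*m) x\<bar> \<partial>M) < (1/2)^k"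
  using someI_ex[OF cauchy_L1[of "(1/2)^k"]] unfolding NN_def by auto

definition r :: "nat \<Rightarrow> nat" where "r k = k + (\<Sum>i\<le>k. NN i)"

lemma r_mono: "strict_mono r"
  unfolding strict_mono_Suc_iff r_def by simp

lemma r_ge: "NN k \<le> r k"
  unfolding r_def by (simp add: trans_le_add2 member_le_sum)

abbreviation "fs k \<equiv> Pn (2 * r k)"

definition dd :: "nat \<Rightarrow> 'x \<Rightarrow> real" where "dd k x = fs (Suc k) x - fs k x"

lemma dd_L1: "(\<integral>x. \<bar>dd k x\<bar> \<partial>M) < (1/2)^k"
proof -
  have "r k \<le> r (Suc k)" using r_mono by (simp add: strict_mono_leD)
  then show ?thesis unfolding dd_def using NN[of k "r (Suc k)" "r k"] r_ge[of k] by simp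
qed

lemma good_dd: "good 2 (dd k)"
  unfolding dd_def using good_diff[OF good_Pn good_Pn] by simp

lemma AE_summable: "AE x in M. summable (\<lambda>k. dd k x)"
proof -
  have m: "\<And>k. (\<lambda>x. ennreal \<bar>dd k x\<bar>) \<in> borel_measurable M"
    using goodD(1)[OF good_dd] by measurable
  have "(\<integral>\<^sup>+ x. (\<Sum>k. ennreal \<bar>dd k x\<bar>) \<partial>M) = (\<Sum>k. \<integral>\<^sup>+ x. ennreal \<bar>dd k x\<bar> \<partial>M)"
    by (rule nn_integral_suminf[OF m])
  also have "\<dots> = (\<Sum>k. ennreal (\<integral>x. \<bar>dd k x\<bar> \<partial>M))"
    by (subst nn_integral_eq_integral) (auto intro: good_int[OF good_abs[OF good_dd]])
  also have "\<dots> \<le> (\<Sum>k. ennreal ((1/2)^k))"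
    by (intro suminf_le) (auto intro: less_imp_le dd_L1)
  also have "\<dots> = ennreal (\<Sum>k. (1/2)^k)"
    by (rule suminf_ennreal2) auto
  finally have "(\<integral>\<^sup>+ x. (\<Sum>k. ennreal \<bar>dd k x\<bar>) \<partial>M) \<noteq> \<infinity>"
    by (metis ennreal_neq_top infinity_ennreal_def neq_top_trans)
  then have "AE x in M. (\<Sum>k. ennreal \<bar>dd k x\<bar>) \<noteq> \<infinity>"
    by (intro nn_integral_PInf_AE) (use m in auto)
  then show ?thesis
  proof eventually_elim
    case (elim x)
    then have "summable (\<lambda>k. \<bar>dd k x\<bar>)"
      by (intro summable_suminf_not_top) auto
    then show ?case by (rule summable_rabs_cancel)
  qed
qed

definition g :: "'x \<Rightarrow> real" where
  "g x = max (-1) (min 1 (lim (\<lambda>k. fs k x)))"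

lemma AE_lim: "AE x in M. (\<lambda>k. fs k x) \<longlonglongrightarrow> g x"
  using AE_summable
proof eventually_elim
  case (elim x)
  have "(\<lambda>n. \<Sum>i<n. dd i x) \<longlonglongrightarrow> suminf (\<lambda>k. dd k x)"
    using elim by (rule summable_LIMSEQ)
  moreover have "(\<Sum>i<n. dd i x) = fs n x - fs 0 x" for n
    unfolding dd_def by (rule sum_lessThan_telescope)
  ultimately have "(\<lambda>n. fs n x - fs 0 x + fs 0 x) \<longlonglongrightarrow> suminf (\<lambda>k. dd k x) + fs 0 x"
    by (intro tendsto_add) auto
  then have "convergent (\<lambda>k. fs k x)" by (auto simp: convergent_def)
  then have lim: "(\<lambda>k. fs k x) \<longlonglongrightarrow> lim (\<lambda>k. fs k x)" by (simp add: convergent_LIMSEQ_iff)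
  have b: "\<bar>fs k x\<bar> \<le> 1" for k using goodD(2)[OF good_Pn] .
  have "lim (\<lambda>k. fs k x) \<le> 1" by (rule LIMSEQ_le_const2[OF lim]) (use b in \<open>auto simp: abs_le_iff\<close>)
  moreover have "-1 \<le> lim (\<lambda>k. fs k x)" by (rule LIMSEQ_le_const[OF lim]) (use b in \<open>auto simp: abs_le_iff\<close>)
  ultimately have "g x = lim (\<lambda>k. fs k x)" unfolding g_def by simp
  then show ?case using lim by simp
qed

lemma good_g: "good 1 g"
proof -
  have "(\<lambda>x. lim (\<lambda>k. fs k x)) \<in> borel_measurable M"
    by (rule borel_measurable_lim_metric) (rule goodD(1)[OF good_Pn])
  then show ?thesis unfolding good_def g_def by auto
qed

lemma dom_conv:
  assumes "\<And>k. good C (h k)" "good C h0" "AE x in M. (\<lambda>k. h k x) \<longlonglongrightarrow> h0 x"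
  shows "(\<lambda>k. integral\<^sup>L M (h k)) \<longlonglongrightarrow> integral\<^sup>L M h0"
proof (rule integral_dominated_convergence[where w="\<lambda>_. C"])
  show "integrable M (\<lambda>_. C)" using prob by (simp add: prob_space_def finite_measure.integrable_const)
qed (use assms in \<open>auto simp: good_def\<close>)

lemma energy:
  assumes h: "good C h"
  shows "measure_pmf.expectation w (\<lambda>b. measure_pmf.expectation w (\<lambda>a. \<integral>x. (h (T a (T b x)) - h x)\<^sup>2 \<partial>M))
     = 2 * (\<integral>x. (h x)\<^sup>2 \<partial>M) - 2 * (\<integral>x. (P h x)\<^sup>2 \<partial>M)"
proof -
  have hab: "good C (\<lambda>x. h (T a (T b x)))" for a b
    using good_T[OF good_T[OF h, of a], of b] .
  define c where "c = (\<integral>x. (h x)\<^sup>2 \<partial>M)"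
  define G where "G a b = (\<integral>x. h x * h (T a (T b x)) \<partial>M)" for a b
  have sqT: "(\<integral>x. (h (T a (T b x)))\<^sup>2 \<partial>M) = c" for a b
  proof -
    have "(\<integral>x. (h (T a (T b x)))\<^sup>2 \<partial>M) = (\<integral>y. (h (T a y))\<^sup>2 \<partial>M)"
      by (rule int_T[OF goodD(1)[OF good_sq[OF good_T[OF h]]]])
    also have "\<dots> = c" unfolding c_def by (rule int_T[OF goodD(1)[OF good_sq[OF h]]])
    finally show ?thesis .
  qed
  have inner: "(\<integral>x. (h (T a (T b x)) - h x)\<^sup>2 \<partial>M) = 2 * c - 2 * G a b" for a b
    using int_sq_diff[OF hab h, of a b] sqT[of a b] unfolding G_def c_def by (simp add: mult.commute)
  have Gb: "\<bar>G a b\<bar> \<le> C * C" for a b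
    unfolding G_def by (rule good_int_bound[OF good_mult[OF h hab]])
  have Gib: "\<bar>measure_pmf.expectation w (\<lambda>a. G a b)\<bar> \<le> C * C" for b
    by (rule pmf_int_bound) (rule Gb)
  have i1: "measure_pmf.expectation w (\<lambda>a. 2 * c - 2 * G a b) = 2 * c - 2 * measure_pmf.expectation w (\<lambda>a. G a b)" for b
  proof -
    have "integrable (measure_pmf w) (\<lambda>a. G a b)" by (rule pmf_integrable_bound[OF Gb])
    then show ?thesis by (simp add: measure_pmf.prob_space)
  qed
  have i2: "measure_pmf.expectation w (\<lambda>b. 2 * c - 2 * measure_pmf.expectation w (\<lambda>a. G a b)) =
     2 * c - 2 * measure_pmf.expectation w (\<lambda>b. measure_pmf.expectation w (\<lambda>a. G a b))"
  proof -
    have "integrable (measure_pmf w) (\<lambda>b. measure_pmf.expectation w (\<lambda>a. G a b))"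
      by (rule pmf_integrable_bound[OF Gib])
    then show ?thesis by (simp add: measure_pmf.prob_space)
  qed
  have GG: "measure_pmf.expectation w (\<lambda>b. measure_pmf.expectation w (\<lambda>a. G a b)) = (\<integral>x. (P h x)\<^sup>2 \<partial>M)"
  proof -
    have "(\<integral>x. h x * P (P h) x \<partial>M) = measure_pmf.expectation w (\<lambda>b. \<integral>x. h x * P h (T b x) \<partial>M)"
      by (rule Pv_fub[OF h good_Pv[OF h]])
    also have "\<dots> = measure_pmf.expectation w (\<lambda>b. measure_pmf.expectation w (\<lambda>a. G a b))"
    proof -
      have "(\<integral>x. h x * P h (T b x) \<partial>M) = measure_pmf.expectation w (\<lambda>a. G a b)" for b
      proof -
        have "(\<integral>x. h x * P h (T b x) \<partial>M) = (\<integral>x. measure_pmf.expectation w (\<lambda>a. h x * h (T a (T b x))) \<partial>M)"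
          unfolding Pv_def by simp
        also have "\<dots> = measure_pmf.expectation w (\<lambda>a. G a b)"
          unfolding G_def
          by (rule fub_pmf(2)[where C="C*C"]) (use good_mult[OF h hab] in \<open>auto simp: prob good_def\<close>)
        finally show ?thesis .
      qed
      then show ?thesis by simp
    qed
    finally have e1: "(\<integral>x. h x * P (P h) x \<partial>M) = measure_pmf.expectation w (\<lambda>b. measure_pmf.expectation w (\<lambda>a. G a b))" .
    have "(\<integral>x. h x * P (P h) x \<partial>M) = (\<integral>x. P h x * P h x \<partial>M)"
      by (rule selfadj[OF h good_Pv[OF h]])
    then show ?thesis using e1 by (simp add: power2_eq_square)
  qed
  have "measure_pmf.expectation w (\<lambda>b. measure_pmf.expectation w (\<lambda>a. \<integral>x. (h (T a (T b x)) - h x)\<^sup>2 \<partial>M))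
     = 2 * c - 2 * (\<integral>x. (P h x)\<^sup>2 \<partial>M)"
    by (simp only: inner i1 i2 GG)
  then show ?thesis by (simp add: c_def)
qed

lemma sq0_AE:
  assumes "good C u" "good C' v" "(\<integral>x. (u x - v x)\<^sup>2 \<partial>M) = 0"
  shows "AE x in M. u x = v x"
proof -
  have "AE x in M. (u x - v x)\<^sup>2 = 0"
    using assms(3) integral_nonneg_eq_0_iff_AE[OF good_int[OF good_sq[OF good_diff[OF assms(1,2)]]]]
    by simp
  then show ?thesis by eventually_elim simp
qed

lemma sm2: "strict_mono (\<lambda>k. 2 * r k)" and sm21: "strict_mono (\<lambda>k. 2 * r k + 1)"
  using r_mono by (auto simp: strict_mono_def)

lemma a_sub: "(\<lambda>k. a (2 * r k)) \<longlonglongrightarrow> L" "(\<lambda>k. a (2 * r k + 1)) \<longlonglongrightarrow> L" "(\<lambda>k. a (r k)) \<longlonglongrightarrow> L"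
  using LIMSEQ_subseq_LIMSEQ[OF a_lim sm2] LIMSEQ_subseq_LIMSEQ[OF a_lim sm21]
    LIMSEQ_subseq_LIMSEQ[OF a_lim r_mono] by (auto simp: comp_def)

lemma inv_ab:
  assumes a0: "a0 \<in> set_pmf w" and b0: "b0 \<in> set_pmf w"
  shows "AE x in M. g (T a0 (T b0 x)) = g x"
proof -
  define c0 where "c0 = pmf w b0 * pmf w a0"
  have c0: "0 < c0" unfolding c0_def using a0 b0 by (simp add: set_pmf_iff pmf_positive)
  define Q where "Q k = (\<integral>x. (fs k (T a0 (T b0 x)) - fs k x)\<^sup>2 \<partial>M)" for k
  have Qle: "Q k \<le> (2 * a (2 * r k) - 2 * a (2 * r k + 1)) / c0" for k
  proof -
    let ?h = "fs k"
    have h: "good 1 ?h" by (rule good_Pn)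
    define K where "K b a' = (\<integral>x. (?h (T a' (T b x)) - ?h x)\<^sup>2 \<partial>M)" for b a'
    have Kb: "0 \<le> K b a'" "K b a' \<le> 4" for b a'
    proof -
      have gg: "good 2 (\<lambda>x. ?h (T a' (T b x)) - ?h x)"
        using good_diff[OF good_T[OF good_T[OF h, of a'], of b] h] by simp
      show "0 \<le> K b a'" unfolding K_def by (rule integral_nonneg_AE) auto
      show "K b a' \<le> 4" unfolding K_def using good_int_bound[OF good_sq[OF gg]] by simp
    qed
    have K2: "0 \<le> measure_pmf.expectation w (K b)" "measure_pmf.expectation w (K b) \<le> 4" for b
    proof -
      show "0 \<le> measure_pmf.expectation w (K b)" by (rule integral_nonneg_AE) (use Kb in auto)
      show "measure_pmf.expectation w (K b) \<le> 4"
        using pmf_int_bound[of "K b" 4 w] Kb by (auto simp: abs_le_iff)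
    qed
    have "pmf w a0 * K b0 a0 \<le> measure_pmf.expectation w (K b0)"
      by (rule pmf_single_le[where C=4]) (use Kb in auto)
    moreover have "pmf w b0 * measure_pmf.expectation w (K b0) \<le> measure_pmf.expectation w (\<lambda>b. measure_pmf.expectation w (K b))"
      by (rule pmf_single_le[where C=4, of "\<lambda>b. measure_pmf.expectation w (K b)"]) (use K2 in auto)
    moreover have "measure_pmf.expectation w (\<lambda>b. measure_pmf.expectation w (K b)) = 2 * a (2 * r k) - 2 * a (2 * r k + 1)"
      unfolding K_def using energy[OF h] by (simp add: a_def Pn_Suc)
    ultimately have "c0 * Q k \<le> 2 * a (2 * r k) - 2 * a (2 * r k + 1)"
      unfolding c0_def Q_def K_def
      by (smt (verit, ccfv_SIG) mult.assoc mult_left_mono pmf_nonneg)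
    then show ?thesis using c0 by (simp add: pos_le_divide_eq mult.commute)
  qed
  have lim0: "(\<lambda>k. (2 * a (2 * r k) - 2 * a (2 * r k + 1)) / c0) \<longlonglongrightarrow> (2 * L - 2 * L) / c0"
    using c0 by (intro tendsto_intros a_sub) auto
  have gab: "good 1 (\<lambda>x. g (T a0 (T b0 x)))" using good_T[OF good_T[OF good_g]] .
  have limQ: "Q \<longlonglongrightarrow> (\<integral>x. (g (T a0 (T b0 x)) - g x)\<^sup>2 \<partial>M)"
    unfolding Q_def
  proof (rule dom_conv[where C=4])
    show "good 4 (\<lambda>x. (fs k (T a0 (T b0 x)) - fs k x)\<^sup>2)" for k
      using good_sq[OF good_diff[OF good_T[OF good_T[OF good_Pn]] good_Pn]] by simp
    show "good 4 (\<lambda>x. (g (T a0 (T b0 x)) - g x)\<^sup>2)"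
      using good_sq[OF good_diff[OF gab good_g]] by simp
    have "AE x in M. (\<lambda>k. fs k (T a0 (T b0 x))) \<longlonglongrightarrow> g (T a0 (T b0 x))"
      using AE_T[OF AE_T[OF AE_lim, of a0], of b0] .
    then show "AE x in M. (\<lambda>k. (fs k (T a0 (T b0 x)) - fs k x)\<^sup>2) \<longlonglongrightarrow> (g (T a0 (T b0 x)) - g x)\<^sup>2"
      using AE_lim by eventually_elim (intro tendsto_intros)
  qed
  have "(\<integral>x. (g (T a0 (T b0 x)) - g x)\<^sup>2 \<partial>M) \<le> 0"
    using LIMSEQ_le[OF limQ lim0] Qle by auto
  moreover have "0 \<le> (\<integral>x. (g (T a0 (T b0 x)) - g x)\<^sup>2 \<partial>M)"
    by (rule integral_nonneg_AE) auto
  ultimately show ?thesis using sq0_AE[OF gab good_g] by simp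
qed

lemma int_Pn: "integral\<^sup>L M (Pn n) = 0"
proof (induction n)
  case 0
  interpret prob_space M by (rule prob)
  have gi: "good 1 (indicator D :: 'x \<Rightarrow> real)" using Dm by (auto simp: good_def)
  have "integral\<^sup>L M f = 0" unfolding f_def using Dm
    by (subst Bochner_Integration.integral_diff) (auto simp: prob_space intro: good_int[OF gi])
  then show ?case by (simp add: Pn_def)
next
  case (Suc n) then show ?case by (simp add: Pn_Suc Pv_int[OF good_Pn])
qed

lemma int_g: "integral\<^sup>L M g = 0"
proof -
  have "(\<lambda>k. integral\<^sup>L M (fs k)) \<longlonglongrightarrow> integral\<^sup>L M g"
    by (rule dom_conv[OF good_Pn good_g AE_lim])
  then show ?thesis by (simp add: int_Pn LIMSEQ_const_iff)
qed

lemma L_eq: "L = (\<integral>x. f x * g x \<partial>M)"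
proof -
  have "(\<lambda>k. \<integral>x. f x * fs k x \<partial>M) \<longlonglongrightarrow> (\<integral>x. f x * g x \<partial>M)"
  proof (rule dom_conv[where C=1])
    show "AE x in M. (\<lambda>k. f x * fs k x) \<longlonglongrightarrow> f x * g x"
      using AE_lim by eventually_elim (intro tendsto_intros)
  qed (use good_mult[OF good_f good_Pn] good_mult[OF good_f good_g] in auto)
  moreover have "(\<integral>x. f x * fs k x \<partial>M) = a (r k)" for k
  proof -
    have "J 0 (2 * r k) = a (r k)" using J_a[of 0 "2 * r k"] by simp
    then show ?thesis by (simp add: J_def Pn_def)
  qed
  ultimately show ?thesis using a_sub(3) LIMSEQ_unique by auto
qed

end

locale full = mainloc M T w D for M :: "'x measure" and T :: "'g::{group_add,countable} \<Rightarrow> 'x \<Rightarrow> 'x" and w D +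
  fixes B :: "'h::{group_add,countable} \<Rightarrow> 'x \<Rightarrow> 'x"
  assumes gen: "gen_subgroup (set_pmf (conv_pmf w w)) = UNIV"
   and Bact: "pmp_action M B"
   and comm: "\<And>s h x. T s (B h x) = B h (T s x)"
   and Dinv: "ae_invariant M B D"
   and erg: "ergodic_pair M T B"
begin

sublocale Bp: pmp M B by (rule pmp.intro[OF prob Bact sp])

lemma invT: "AE x in M. g (T s x) = g x"
proof -
  have "s \<in> gen_subgroup (set_pmf (conv_pmf w w))" using gen by simp
  then show ?thesis
  proof induction
    case (gen_base s)
    have "s \<in> (\<lambda>(a, b). a + b) ` (set_pmf w \<times> set_pmf w)"
      using gen_base unfolding conv_pmf_def set_map_pmf set_pair_pmf .
    then obtain p where p: "p \<in> set_pmf w \<times> set_pmf w" "s = (\<lambda>(a, b). a + b) p"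
      by (rule imageE)
    obtain a b where ab: "p = (a, b)" by (cases p)
    have ab1: "a \<in> set_pmf w" "b \<in> set_pmf w" using p(1) ab by auto
    have s: "s = a + b" using p(2) ab by simp
    have "AE x in M. g (T a (T b x)) = g x" by (rule inv_ab[OF ab1])
    then show ?case unfolding s by eventually_elim (simp add: Tadd)
  next
    case gen_zero then show ?case by (simp add: T0)
  next
    case (gen_add a b)
    have "AE x in M. g (T a (T b x)) = g (T b x)" using AE_T[OF gen_add.IH(1), of b] .
    then show ?case using gen_add.IH(2) by eventually_elim (simp add: Tadd)
  next
    case (gen_uminus a)
    have "AE x in M. g (T a (T (- a) x)) = g (T (- a) x)" using AE_T[OF gen_uminus.IH, of "-a"] .
    then show ?case by eventually_elim (simp add: Tinv1)
  qed
qed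

lemma P_B: "P \<phi> (B h x) = P (\<lambda>y. \<phi> (B h y)) x"
  unfolding Pv_def by (simp add: comm)

lemma Pn_B: "(P ^^ n) \<phi> (B h x) = (P ^^ n) (\<lambda>y. \<phi> (B h y)) x"
proof (induction n arbitrary: x)
  case 0 then show ?case by simp
next
  case (Suc n)
  have "(P ^^ Suc n) \<phi> (B h x) = P (\<lambda>y. (P ^^ n) \<phi> (B h y)) x" by (simp add: P_B)
  also have "(\<lambda>y. (P ^^ n) \<phi> (B h y)) = (P ^^ n) (\<lambda>y. \<phi> (B h y))" using Suc by auto
  finally show ?case by simp
qed

lemma Pn_AE: "AE x in M. \<psi> x = \<phi> x \<Longrightarrow> AE x in M. (P ^^ n) \<psi> x = (P ^^ n) \<phi> x"
proof (induction n)
  case 0 then show ?case by simp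
next
  case (Suc n) then show ?case using Pv_AE[of "(P ^^ n) \<psi>" "(P ^^ n) \<phi>" w] by simp
qed

lemma Pn_Binv: "AE x in M. Pn n (B h x) = Pn n x"
proof -
  have "AE x in M. f (B h x) = f x"
    using Bp.inv_ind[OF Dm Dinv, of h] by eventually_elim (simp add: f_def)
  then have "AE x in M. (P ^^ n) (\<lambda>y. f (B h y)) x = (P ^^ n) f x" by (rule Pn_AE)
  then show ?thesis by eventually_elim (simp add: Pn_def Pn_B)
qed

lemma invB: "AE x in M. g (B h x) = g x"
proof -
  have gb: "good 1 (\<lambda>x. g (B h x))" using Bp.good_T[of 1 g h] good_g
    by (simp add: good_def Bp.good_def)
  have gPb: "good 1 (\<lambda>x. fs k (B h x))" for k using Bp.good_T[of 1 "fs k" h] good_Pn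
    by (simp add: good_def Bp.good_def)
  have lim: "(\<lambda>k. \<integral>x. (fs k (B h x) - fs k x)\<^sup>2 \<partial>M) \<longlonglongrightarrow> (\<integral>x. (g (B h x) - g x)\<^sup>2 \<partial>M)"
  proof (rule dom_conv[where C=4])
    show "good 4 (\<lambda>x. (fs k (B h x) - fs k x)\<^sup>2)" for k
      using good_sq[OF good_diff[OF gPb good_Pn]] by simp
    show "good 4 (\<lambda>x. (g (B h x) - g x)\<^sup>2)"
      using good_sq[OF good_diff[OF gb good_g]] by simp
    have "AE x in M. (\<lambda>k. fs k (B h x)) \<longlonglongrightarrow> g (B h x)"
      using Bp.AE_T[OF AE_lim, of h] .
    then show "AE x in M. (\<lambda>k. (fs k (B h x) - fs k x)\<^sup>2) \<longlonglongrightarrow> (g (B h x) - g x)\<^sup>2"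
      using AE_lim by eventually_elim (intro tendsto_intros)
  qed
  have z: "(\<integral>x. (fs k (B h x) - fs k x)\<^sup>2 \<partial>M) = 0" for k
  proof -
    have "(\<integral>x. (fs k (B h x) - fs k x)\<^sup>2 \<partial>M) = (\<integral>x. 0 \<partial>M)"
    proof (rule integral_cong_AE)
      show "(\<lambda>x. (fs k (B h x) - fs k x)\<^sup>2) \<in> borel_measurable M"
        using goodD(1)[OF good_sq[OF good_diff[OF gPb good_Pn]]] .
      show "AE x in M. (fs k (B h x) - fs k x)\<^sup>2 = 0"
        using Pn_Binv[of "2 * r k" h] by eventually_elim simp
    qed simp
    then show ?thesis by simp
  qed
  have eq: "(\<lambda>k. \<integral>x. (fs k (B h x) - fs k x)\<^sup>2 \<partial>M) = (\<lambda>k. 0)" using z by (rule ext)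
  have "(\<integral>x. (g (B h x) - g x)\<^sup>2 \<partial>M) = 0" using lim unfolding eq LIMSEQ_const_iff by simp
  then show ?thesis using sq0_AE[OF gb good_g] by simp
qed

lemma erg_le0:
  assumes u: "good 1 u" and iT: "\<And>s. AE x in M. u (T s x) = u x"
    and iB: "\<And>h. AE x in M. u (B h x) = u x" and iu: "integral\<^sup>L M u = 0"
  shows "AE x in M. u x \<le> 0"
proof -
  interpret prob_space M by (rule prob)
  let ?S = "{x. 0 < u x}"
  have Sm: "?S \<in> sets M"
  proof -
    have "u -` {0<..} \<inter> space M \<in> sets M" by (rule measurable_sets[OF goodD(1)[OF u]]) simp
    then show ?thesis using sp by (simp add: vimage_def)
  qed
  have "ae_invariant M T ?S" by (rule ae_inv_set[OF goodD(1)[OF u] iT])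
  moreover have "ae_invariant M B ?S" by (rule Bp.ae_inv_set) (use u iB in \<open>auto simp: good_def\<close>)
  moreover have e: "\<forall>S\<in>sets M. ae_invariant M T S \<and> ae_invariant M B S \<longrightarrow> measure M S = 0 \<or> measure M S = 1"
    using erg unfolding ergodic_pair_def by simp
  ultimately have "measure M ?S = 0 \<or> measure M ?S = 1" using e[rule_format, OF Sm] by blast
  then show ?thesis
  proof
    assume "measure M ?S = 1"
    then have "AE x in M. x \<in> ?S" by (rule AE_prob_1)
    then have pos: "AE x in M. 0 < u x" by simp
    then have "AE x in M. 0 \<le> u x" by eventually_elim simp
    then have "AE x in M. u x = 0" using integral_nonneg_eq_0_iff_AE[OF good_int[OF u]] iu by simp
    with pos have "AE x in M. False" by eventually_elim simp
    then show ?thesis by simp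
  next
    assume "measure M ?S = 0"
    then have "emeasure M ?S = 0" using Sm by (simp add: emeasure_eq_measure)
    then have "AE x in M. x \<notin> ?S" using Sm by (intro AE_I[where N="?S"]) auto
    then show ?thesis by eventually_elim auto
  qed
qed

lemma g0: "AE x in M. g x = 0"
proof -
  have "AE x in M. g x \<le> 0" by (rule erg_le0[OF good_g invT invB int_g])
  moreover have "AE x in M. - g x \<le> 0"
  proof (rule erg_le0)
    show "good 1 (\<lambda>x. - g x)" using good_g by (simp add: good_def)
    show "AE x in M. - g (T s x) = - g x" for s using invT[of s] by eventually_elim simp
    show "AE x in M. - g (B h x) = - g x" for h using invB[of h] by eventually_elim simp
    show "(\<integral>x. - g x \<partial>M) = 0" using int_g by simp
  qed
  ultimately show ?thesis by eventually_elim simp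
qed

lemma L0: "L = 0"
proof -
  have "(\<integral>x. f x * g x \<partial>M) = (\<integral>x. 0 \<partial>M)"
  proof (rule integral_cong_AE)
    show "(\<lambda>x. f x * g x) \<in> borel_measurable M" using goodD(1)[OF good_mult[OF good_f good_g]] .
    show "AE x in M. f x * g x = 0" using g0 by eventually_elim simp
  qed simp
  then show ?thesis using L_eq by simp
qed

lemma a0: "a \<longlonglongrightarrow> 0" using a_lim L0 by simp

lemma Pv_pow: "good C \<psi> \<Longrightarrow> Pv (conv_pow w n) \<psi> = (P ^^ n) \<psi>"
proof (induction n)
  case 0 then show ?case by (auto simp: Pv_def T0)
next
  case (Suc n)
  show ?case
  proof
    fix x
    have "Pv (conv_pow w (Suc n)) \<psi> x = P (Pv (conv_pow w n) \<psi>) x"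
      using Pv_conv[OF Suc.prems, of "conv_pow w n" w x] by simp
    then show "Pv (conv_pow w (Suc n)) \<psi> x = (P ^^ Suc n) \<psi> x" using Suc by simp
  qed
qed

lemma Pn_ind: "(P ^^ n) (indicator D) = (\<lambda>x. Pn n x + measure M D)"
proof (induction n)
  case 0 then show ?case by (auto simp: Pn_def f_def)
next
  case (Suc n)
  show ?case
  proof
    fix x
    have "(P ^^ Suc n) (indicator D) x = P (\<lambda>y. Pn n y + measure M D) x" using Suc by simp
    also have "\<dots> = Pn (Suc n) x + measure M D" by (simp add: Pv_const[OF good_Pn] Pn_Suc)
    finally show "(P ^^ Suc n) (indicator D) x = Pn (Suc n) x + measure M D" .
  qed
qed

lemma final:
  assumes p: "1 \<le> p"
  shows "(\<lambda>n. (\<integral>x. \<bar>measure M D - action_op T (conv_pow w n) (indicator D) x\<bar> powr p \<partial>M)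
            powr (1 / p)) \<longlonglongrightarrow> 0"
proof -
  have gi: "good 1 (indicator D :: 'x \<Rightarrow> real)" using Dm by (auto simp: good_def)
  have eq: "\<bar>measure M D - action_op T (conv_pow w n) (indicator D) x\<bar> = \<bar>Pn n x\<bar>" for n x
  proof -
    have "action_op T (conv_pow w n) (indicator D) x = Pv (conv_pow w n) (indicator D) x"
      unfolding Pv_def by (rule action_op_eq[where C=1]) (simp add: indicator_def)
    also have "\<dots> = Pn n x + measure M D" using Pv_pow[OF gi, of n] Pn_ind[of n] by simp
    finally show ?thesis by simp
  qed
  define I where "I n = (\<integral>x. \<bar>Pn n x\<bar> powr p \<partial>M)" for n
  have I0: "0 \<le> I n" for n unfolding I_def by (rule integral_nonneg_AE) auto
  have Ile: "I n \<le> sqrt (a n)" for n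
  proof -
    have gp: "good 1 (\<lambda>x. \<bar>Pn n x\<bar> powr p)"
    proof -
      have m: "(\<lambda>x. \<bar>Pn n x\<bar> powr p) \<in> borel_measurable M"
        using goodD(1)[OF good_Pn[of n]] by measurable
      have "\<bar>Pn n x\<bar> powr p \<le> 1" for x
      proof -
        have b: "\<bar>Pn n x\<bar> \<le> 1" using goodD(2)[OF good_Pn] .
        have "\<bar>Pn n x\<bar> powr p \<le> \<bar>Pn n x\<bar> powr 1"
          by (rule powr_mono') (use p b in auto)
        then show ?thesis using b by (cases "Pn n x = 0") auto
      qed
      then show ?thesis using m by (auto simp: good_def)
    qed
    have "I n \<le> (\<integral>x. \<bar>Pn n x\<bar> \<partial>M)" unfolding I_def
    proof (rule integral_mono)
      show "integrable M (\<lambda>x. \<bar>Pn n x\<bar> powr p)" by (rule good_int[OF gp])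
      show "integrable M (\<lambda>x. \<bar>Pn n x\<bar>)" by (rule good_int[OF good_abs[OF good_Pn]])
      fix x
      have b: "\<bar>Pn n x\<bar> \<le> 1" using goodD(2)[OF good_Pn] .
      have "\<bar>Pn n x\<bar> powr p \<le> \<bar>Pn n x\<bar> powr 1"
        by (rule powr_mono') (use p b in auto)
      then show "\<bar>Pn n x\<bar> powr p \<le> \<bar>Pn n x\<bar>" by (cases "Pn n x = 0") auto
    qed
    also have "\<dots> \<le> sqrt (a n)" unfolding a_def by (rule L1_le_L2[OF good_Pn])
    finally show ?thesis .
  qed
  have sq: "(\<lambda>n. sqrt (a n)) \<longlonglongrightarrow> 0" using tendsto_real_sqrt[OF a0] by simp
  have "I \<longlonglongrightarrow> 0"
    by (rule real_tendsto_sandwich[OF _ _ tendsto_const sq]) (use I0 Ile in auto)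
  then have "(\<lambda>n. I n powr (1 / p)) \<longlonglongrightarrow> 0"
    by (rule tendsto_zero_powrI[OF _ tendsto_const]) (use I0 p in auto)
  then show ?thesis unfolding I_def eq .
qed

end

theorem mainTheorem7:
  fixes w :: "'g::{group_add, countable} pmf"
    and M :: "'x::polish_space measure"
    and A :: "'g \<Rightarrow> 'x \<Rightarrow> 'x"
    and B :: "'h::{group_add, countable} \<Rightarrow> 'x \<Rightarrow> 'x"
    and D :: "'x set" and p :: real
  assumes "absolutely_generating w"
    and "prob_space M" and "sets M = sets borel"
    and "pmp_action M A" and "pmp_action M B"
    and "\<forall>g h. A g \<circ> B h = B h \<circ> A g"
    and "ergodic_pair M A B"
    and "D \<in> sets M" and "ae_invariant M B D"
    and "1 \<le> p"
  shows "(\<lambda>n. (\<integral>x. \<bar>measure M D - action_op A (conv_pow w n) (indicator D) x\<bar> powr p \<partial>M)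
            powr (1 / p)) \<longlonglongrightarrow> 0"
proof -
  have sp: "space M = UNIV" using sets_eq_imp_space_eq[OF assms(3)] by simp
  have sym: "\<And>s. pmf w s = pmf w (- s)" and gen: "gen_subgroup (set_pmf (conv_pmf w w)) = UNIV"
    using assms(1) unfolding absolutely_generating_def by auto
  have comm: "\<And>s h x. A s (B h x) = B h (A s x)"
    using assms(6) by (metis comp_apply)
  interpret full M A w D B
    by (intro full.intro mainloc.intro pmp.intro mainloc_axioms.intro full_axioms.intro)
       (use assms sp sym gen comm in auto)
  show ?thesis by (rule final[OF assms(10)])
qed

end
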